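(* Let $q\ge2$ and $\mu,R>0$. There is no sequence of ID codes for $\Pi^q_{n_i}$, $i=1,2,\dots$, with $n_i\to\infty$, with $M_i\ge 2^{Rn_i^{q-1}}$ messages, and with type-I and type-II error probabilities satisfying $\lambda_{1,i}<n_i^{-\mu}$ and $\lambda_{2,i}<n_i^{-\mu}$ for all $i$.
   Context: Fix an integer $q\ge 2$ and let $\mathcal A_q=\{1,\dots,q\}$. For $n\ge 1$, $S_n$ is the symmetric group on $\{1,\dots,n\}$, and for $\mathbf x\in\mathcal A_q^n$, $\sigma\in S_n$, we write $\sigma\mathbf x=(x_{\sigma^{-1}(1)},\dots,x_{\sigma^{-1}(n)})$. The $n$-block $q$-ary uniform permutation channel $\Pi^q_n$ has input and output alphabet $\mathcal A_q^n$ and transition probabilities $\Pi^q_n(\mathbf y\mid\mathbf x)=\frac{1}{n!}\sum_{\sigma\in S_n}\mathbf 1\{\mathbf y=\sigma\mathbf x\}$; $\Pi^q$ denotes the family $(\Pi^q_n)_{n\ge1}$. An ID code (with deterministic decoders) with $M$ messages for $\Pi^q_n$ (an "$(n,M,\lambda_1,\lambda_2)$ ID code") is a family $\{(Q_i,\mathcal D_i)\}_{i=1}^M$ where each $Q_i$ is a probability distribution on $\mathcal A_q^n$ (the stochastic encoder of message $i$) and $\mathcal D_i\subseteq\mathcal A_q^n$ (the acceptance region of message $i$). Its error probabilities are $\lambda_{i\to j}=\sum_{\mathbf x}Q_i(\mathbf x)\sum_{\mathbf y\in\mathcal D_j}\Pi^q_n(\mathbf y\mid\mathbf x)$ for $i\ne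 j$ and $\lambda_{i\not\to i}=\sum_{\mathbf x}Q_i(\mathbf x)\sum_{\mathbf y\notin\mathcal D_i}\Pi^q_n(\mathbf y\mid\mathbf x)$; the type-I error probability is $\lambda_1=\max_i\lambda_{i\not\to i}$ and the type-II error probability is $\lambda_2=\max_{i\ne j}\lambda_{i\to j}$. *)

theory Defs
  imports "HOL-Analysis.Analysis" "HOL-Combinatorics.Permutations"
begin

definition words :: "nat \<Rightarrow> nat \<Rightarrow> nat list set" where
  "words q n = {xs. length xs = n \<and> set xs \<subseteq> {1..q}}"

definition perm_act :: "(nat \<Rightarrow> nat) \<Rightarrow> nat list \<Rightarrow> nat list" where
  "perm_act \<sigma> xs = map (\<lambda>j. xs ! inv \<sigma> j) [0..<length xs]"

definition perm_channel :: "nat \<Rightarrow> nat list \<Rightarrow> nat list \<Rightarrow> real" where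
  "perm_channel n y x =
     (\<Sum>\<sigma>\<in>{\<sigma>. \<sigma> permutes {..<n}}. (if y = perm_act \<sigma> x then 1 else 0)) / fact n"

text \<open>ID code with messages 1..M: stochastic encoders Q m (distributions on words q n)
  and acceptance regions D m \<subseteq> words q n.\<close>
definition is_ID_code ::
  "nat \<Rightarrow> nat \<Rightarrow> nat \<Rightarrow> (nat \<Rightarrow> nat list \<Rightarrow> real) \<Rightarrow> (nat \<Rightarrow> nat list set) \<Rightarrow> bool" where
  "is_ID_code q n M Q D \<longleftrightarrow> 1 \<le> n \<and>
     (\<forall>m\<in>{1..M}. (\<forall>x\<in>words q n. 0 \<le> Q m x) \<and> (\<Sum>x\<in>words q n. Q m x) = 1
                 \<and> D m \<subseteq> words q n)"

definition err_cross :: "nat \<Rightarrow> nat \<Rightarrow> (nat \<Rightarrow> nat list \<Rightarrow> real) \<Rightarrow> (nat \<Rightarrow> nat list set)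
    \<Rightarrow> nat \<Rightarrow> nat \<Rightarrow> real" where
  "err_cross q n Q D i j = (\<Sum>x\<in>words q n. Q i x * (\<Sum>y\<in>D j. perm_channel n y x))"

definition err_miss :: "nat \<Rightarrow> nat \<Rightarrow> (nat \<Rightarrow> nat list \<Rightarrow> real) \<Rightarrow> (nat \<Rightarrow> nat list set)
    \<Rightarrow> nat \<Rightarrow> real" where
  "err_miss q n Q D i = (\<Sum>x\<in>words q n. Q i x * (\<Sum>y\<in>words q n - D i. perm_channel n y x))"

text \<open>Type-I error: max over messages. Type-II error: max over ordered pairs i \<noteq> j
  (taken to be 0 when M = 1, i.e. the max of the empty set is read as 0).\<close>
definition type1_err :: "nat \<Rightarrow> nat \<Rightarrow> nat \<Rightarrow> (nat \<Rightarrow> nat list \<Rightarrow> real) \<Rightarrow> (nat \<Rightarrow> nat list set) \<Rightarrow> real" where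
  "type1_err q n M Q D = Max ((\<lambda>i. err_miss q n Q D i) ` {1..M})"

definition type2_err :: "nat \<Rightarrow> nat \<Rightarrow> nat \<Rightarrow> (nat \<Rightarrow> nat list \<Rightarrow> real) \<Rightarrow> (nat \<Rightarrow> nat list set) \<Rightarrow> real" where
  "type2_err q n M Q D =
     Max (insert 0 ((\<lambda>(i,j). err_cross q n Q D i j) ` {(i,j). i \<in> {1..M} \<and> j \<in> {1..M} \<and> i \<noteq> j}))"

end

theory Submission imports Defs "HOL-Real_Asymp.Real_Asymp" begin

definition phi :: "nat list set \<Rightarrow> nat list \<Rightarrow> real" where
  "phi D x = (\<Sum>p\<in>{p. p permutes {..<length x}}. if permute_list p x \<in> D then 1 else 0)"

lemma perm_act_eq: "perm_act \<sigma> xs = permute_list (inv \<sigma>) xs"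
  by (simp add: perm_act_def permute_list_def)

lemma phi_alt: "phi D x = (\<Sum>\<sigma>\<in>{\<sigma>. \<sigma> permutes {..<length x}}. if perm_act \<sigma> x \<in> D then 1 else 0)"
  unfolding phi_def perm_act_eq
  by (rule sum_permutations_inverse)

lemma phi_sort: "phi D (sort x) = phi D x"
proof -
  obtain p where p: "p permutes {..<length x}" "permute_list p x = sort x"
    using mset_eq_permutation[of "sort x" x] by auto
  have "phi D (sort x) = (\<Sum>r\<in>{r. r permutes {..<length x}}. if permute_list (p \<circ> r) x \<in> D then 1 else 0)"
    unfolding phi_def length_sort
    by (intro sum.cong refl) (simp add: permute_list_compose p(2)[symmetric])
  also have "\<dots> = phi D x"
    unfolding phi_def using setum_permutations_compose_left[OF p(1), symmetric] by simp
  finally show ?thesis .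
qed

lemma perm_act_words: "x \<in> words q n \<Longrightarrow> \<sigma> permutes {..<n} \<Longrightarrow> perm_act \<sigma> x \<in> words q n"
  unfolding perm_act_eq words_def
  by (auto simp: permutes_inv)

lemma h_eq: assumes "finite D" "length x = n"
  shows "(\<Sum>y\<in>D. perm_channel n y x) = phi D x / fact n"
proof -
  have "(\<Sum>y\<in>D. perm_channel n y x) = (\<Sum>y\<in>D. \<Sum>\<sigma>\<in>{\<sigma>. \<sigma> permutes {..<n}}. (if y = perm_act \<sigma> x then 1 else 0)) / fact n"
    unfolding perm_channel_def by (simp add: sum_divide_distrib)
  also have "(\<Sum>y\<in>D. \<Sum>\<sigma>\<in>{\<sigma>. \<sigma> permutes {..<n}}. (if y = perm_act \<sigma> x then 1 else 0::real))
      = (\<Sum>\<sigma>\<in>{\<sigma>. \<sigma> permutes {..<n}}. \<Sum>y\<in>D. (if y = perm_act \<sigma> x then 1 else 0))"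
    by (rule sum.swap)
  also have "\<dots> = phi D x" unfolding phi_alt assms(2)[symmetric]
    by (intro sum.cong refl) (simp add: assms(1))
  finally show ?thesis .
qed

lemma phi_bounds: "0 \<le> phi D x" "phi D x \<le> fact (length x)"
proof -
  show "0 \<le> phi D x" unfolding phi_def by (rule sum_nonneg) auto
  have "phi D x \<le> (\<Sum>p\<in>{p. p permutes {..<length x}}. 1)"
    unfolding phi_def by (rule sum_mono) auto
  also have "\<dots> = fact (length x)" by (simp add: card_permutations)
  finally show "phi D x \<le> fact (length x)" .
qed

lemma phi_words: assumes "x \<in> words q n" shows "phi (words q n) x = fact n"
proof -
  have ln: "length x = n" using assms by (simp add: words_def)
  have "phi (words q n) x = (\<Sum>\<sigma>\<in>{\<sigma>. \<sigma> permutes {..<n}}. 1)"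
    unfolding phi_alt ln by (intro sum.cong refl) (simp add: perm_act_words[OF assms])
  also have "\<dots> = fact n" by (simp add: card_permutations)
  finally show ?thesis .
qed

lemma phi_diff: assumes "finite W" "D \<subseteq> W" shows "phi (W - D) x = phi W x - phi D x"
  unfolding phi_def sum_subtractf[symmetric] using assms by (intro sum.cong refl) auto


lemma greedy:
  fixes Q :: "'a \<Rightarrow> real" and A :: "nat \<Rightarrow> 'a set" and Ai :: "'a set"
  assumes fin: "finite Ai" and nn: "\<forall>x\<in>Ai. 0 \<le> Q x" and pos: "(\<Sum>x\<in>Ai. Q x) > 0" and finJ: "finite J0"
    and small: "\<forall>j\<in>J0. (\<Sum>x\<in>Ai \<inter> A j. Q x) \<le> \<eta> * (\<Sum>x\<in>Ai. Q x)" and eta: "\<eta> \<ge> 0"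
  shows "\<exists>S. S \<subseteq> Ai \<and> card S \<le> k \<and> real (card {j\<in>J0. S \<subseteq> A j}) \<le> \<eta>^k * card J0"
proof (induction k)
  case 0
  show ?case by (rule exI[of _ "{}"]) auto
next
  case (Suc k)
  then obtain S where S: "S \<subseteq> Ai" "card S \<le> k" "real (card {j\<in>J0. S \<subseteq> A j}) \<le> \<eta>^k * card J0"
    by blast
  define J where "J = {j\<in>J0. S \<subseteq> A j}"
  have finJJ: "finite J" unfolding J_def using finJ by simp
  define cnt where "cnt x = card {j\<in>J. x \<in> A j}" for x
  have ne: "Ai \<noteq> {}" using pos by auto
  define m where "m = Min (cnt ` Ai)"
  have "m \<in> cnt ` Ai" unfolding m_def using fin ne by (intro Min_in) auto
  then obtain x0 where x0: "x0 \<in> Ai" "cnt x0 = m" by auto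
  have mle: "\<forall>x\<in>Ai. m \<le> cnt x" unfolding m_def using fin by auto
  have cnt_sum: "real (cnt x) = (\<Sum>j\<in>J. if x \<in> A j then 1 else 0)" for x
    unfolding cnt_def using finJJ by (simp add: sum.If_cases Int_def conj_commute)
  have "(\<Sum>x\<in>Ai. Q x * real (cnt x)) = (\<Sum>x\<in>Ai. \<Sum>j\<in>J. if x \<in> A j then Q x else 0)"
    unfolding cnt_sum sum_distrib_left by (intro sum.cong refl) auto
  also have "\<dots> = (\<Sum>j\<in>J. \<Sum>x\<in>Ai. if x \<in> A j then Q x else 0)" by (rule sum.swap)
  also have "\<dots> = (\<Sum>j\<in>J. \<Sum>x\<in>Ai \<inter> A j. Q x)"
    using fin by (intro sum.cong[OF refl]) (simp add: sum.inter_restrict)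
  also have "\<dots> \<le> (\<Sum>j\<in>J. \<eta> * (\<Sum>x\<in>Ai. Q x))"
    using small unfolding J_def by (intro sum_mono) auto
  also have "\<dots> = real (card J) * \<eta> * (\<Sum>x\<in>Ai. Q x)" by simp
  finally have up: "(\<Sum>x\<in>Ai. Q x * real (cnt x)) \<le> real (card J) * \<eta> * (\<Sum>x\<in>Ai. Q x)" .
  have "real m * (\<Sum>x\<in>Ai. Q x) = (\<Sum>x\<in>Ai. Q x * real m)" by (simp add: sum_distrib_left mult.commute)
  also have "\<dots> \<le> (\<Sum>x\<in>Ai. Q x * real (cnt x))"
    using nn mle by (intro sum_mono mult_left_mono) auto
  finally have "real m * (\<Sum>x\<in>Ai. Q x) \<le> real (card J) * \<eta> * (\<Sum>x\<in>Ai. Q x)" using up by linarith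
  hence mle2: "real m \<le> \<eta> * real (card J)" using pos by (simp add: mult.commute)
  have eqJ: "{j\<in>J0. insert x0 S \<subseteq> A j} = {j\<in>J. x0 \<in> A j}" unfolding J_def by auto
  have "real (card {j\<in>J0. insert x0 S \<subseteq> A j}) = real m" using eqJ x0(2) cnt_def by simp
  also have "\<dots> \<le> \<eta> * real (card J)" by (rule mle2)
  also have "\<dots> \<le> \<eta> * (\<eta>^k * card J0)" using S(3) eta unfolding J_def by (intro mult_left_mono) auto
  finally have c1: "real (card {j\<in>J0. insert x0 S \<subseteq> A j}) \<le> \<eta>^Suc k * card J0" by simp
  have "finite S" using S(1) fin finite_subset by blast
  hence "card (insert x0 S) \<le> Suc k" using S(2) card_insert_le_m1 
    by (metis card_insert_if le_SucI not_less_eq_eq)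
  thus ?case using c1 S(1) x0(1) by (intro exI[of _ "insert x0 S"]) auto
qed


lemma length_count_sum: "finite S \<Longrightarrow> set xs \<subseteq> S \<Longrightarrow> length xs = (\<Sum>a\<in>S. count (mset xs) a)"
proof (induction xs)
  case Nil then show ?case by simp
next
  case (Cons x xs)
  have "(\<Sum>a\<in>S. count (mset (x#xs)) a) = (\<Sum>a\<in>S. count (mset xs) a + (if x = a then 1 else 0))"
    by (intro sum.cong refl) auto
  also have "\<dots> = (\<Sum>a\<in>S. count (mset xs) a) + 1"
    using Cons.prems by (simp add: sum.distrib)
  finally show ?case using Cons by simp
qed

lemma card_sorted_words: assumes "q \<ge> 1"
  shows "card (sort ` words q n) \<le> (n+1)^(q-1)"
proof -
  define f where "f xs = restrict (\<lambda>a. count (mset xs) a) {1..q-1}" for xs :: "nat list"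
  have sub: "f ` (sort ` words q n) \<subseteq> (\<Pi>\<^sub>E a\<in>{1..q-1}. {0..n})"
  proof
    fix z assume "z \<in> f ` (sort ` words q n)"
    then obtain x where x: "x \<in> words q n" "z = f (sort x)" by auto
    have "count (mset x) a \<le> n" for a
      using x(1) count_le_size[of "mset x" a] unfolding words_def by simp
    thus "z \<in> (\<Pi>\<^sub>E a\<in>{1..q-1}. {0..n})" using x(2) unfolding f_def by auto
  qed
  have key: "mset x = mset y" if x: "x \<in> words q n" and y: "y \<in> words q n" and e: "f (sort x) = f (sort y)" for x y
  proof (rule multiset_eqI)
    fix a
    have e1: "count (mset x) b = count (mset y) b" if "b \<in> {1..q-1}" for b
      using fun_cong[OF e, of b] that unfolding f_def by simp
    have fin: "finite {1..q}" by simp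
    have sx: "set x \<subseteq> {1..q}" and sy: "set y \<subseteq> {1..q}" and lx: "length x = n" and ly: "length y = n"
      using x y unfolding words_def by auto
    have ins: "{1..q} = insert q {1..q-1}" using assms by auto
    have qn: "q \<notin> {1..q-1}" using assms by auto
    have "n = count (mset x) q + (\<Sum>b\<in>{1..q-1}. count (mset x) b)"
      using length_count_sum[OF fin sx] lx unfolding ins using qn by (simp add: sum.insert)
    moreover have "n = count (mset y) q + (\<Sum>b\<in>{1..q-1}. count (mset y) b)"
      using length_count_sum[OF fin sy] ly unfolding ins using qn by (simp add: sum.insert)
    moreover have "(\<Sum>b\<in>{1..q-1}. count (mset x) b) = (\<Sum>b\<in>{1..q-1}. count (mset y) b)"
      using e1 by (intro sum.cong refl) auto
    ultimately have eq: "count (mset x) q = count (mset y) q" by linarith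
    show "count (mset x) a = count (mset y) a"
    proof (cases "a \<in> {1..q}")
      case True
      show ?thesis
      proof (cases "a = q")
        case True then show ?thesis using eq by simp
      next
        case False then have "a \<in> {1..q-1}" using \<open>a \<in> {1..q}\<close> by auto
        then show ?thesis using e1 by blast
      qed
    next
      case False
      then have "a \<notin> set x" "a \<notin> set y" using sx sy by auto
      then show ?thesis by (metis count_mset_0_iff)
    qed
  qed
  have inj: "inj_on f (sort ` words q n)"
  proof (rule inj_onI)
    fix u v assume "u \<in> sort ` words q n" "v \<in> sort ` words q n" "f u = f v"
    then obtain x y where "x \<in> words q n" "y \<in> words q n" "u = sort x" "v = sort y" "f (sort x) = f (sort y)" by auto
    then have "mset x = mset y" using key by blast
    then have "sort x = sort y" using properties_for_sort[of "sort y" x] by simp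
    then show "u = v" using \<open>u = sort x\<close> \<open>v = sort y\<close> by simp
  qed
  have "card (sort ` words q n) = card (f ` (sort ` words q n))" using inj by (simp add: card_image)
  also have "\<dots> \<le> card (\<Pi>\<^sub>E a\<in>{1..q-1}. {0..n})" by (rule card_mono[OF _ sub]) (simp add: finite_PiE)
  also have "\<dots> = (n+1)^(q-1)" by (simp add: card_PiE)
  finally show ?thesis .
qed


lemma card_small_subsets:
  assumes fin: "finite C"
  shows "card {S. S \<subseteq> C \<and> card S \<le> k} = (\<Sum>s\<le>k. card C choose s)"
proof -
  have eq: "{S. S \<subseteq> C \<and> card S \<le> k} = (\<Union>s\<in>{..k}. {S. S \<subseteq> C \<and> card S = s})" by auto
  have "card (\<Union>s\<in>{..k}. {S. S \<subseteq> C \<and> card S = s}) = (\<Sum>s\<le>k. card {S. S \<subseteq> C \<and> card S = s})"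
    using fin by (intro card_UN_disjoint) auto
  also have "\<dots> = (\<Sum>s\<le>k. card C choose s)" using fin by (simp add: n_subsets)
  finally show ?thesis using eq by simp
qed

lemma binom_partial_bound:
  assumes "k \<ge> 1" "c \<le> N"
  shows "real (\<Sum>s\<le>k. c choose s) \<le> exp k * ((real N + k) / k) ^ k"
proof -
  define t where "t = real k / (real N + k)"
  have t0: "t > 0" and t1: "t \<le> 1" using assms unfolding t_def by auto
  have "t^k * real (\<Sum>s\<le>k. c choose s) = (\<Sum>s\<le>k. real (c choose s) * t^k)"
    by (simp add: sum_distrib_left mult.commute)
  also have "\<dots> \<le> (\<Sum>s\<le>k. real (c choose s) * t^s)"
    using t0 t1 by (intro sum_mono mult_left_mono power_decreasing) auto
  also have "\<dots> \<le> (\<Sum>s\<le>k+c. real (c choose s) * t^s)"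
    using t0 by (intro sum_mono2) auto
  also have "\<dots> = (\<Sum>s\<le>c. real (c choose s) * t^s)"
    by (rule sum.mono_neutral_right) auto
  also have "\<dots> = (t + 1) ^ c" by (simp add: binomial_ring)
  also have "\<dots> \<le> exp t ^ c"
    using t0 by (intro power_mono) (auto simp: add.commute exp_ge_add_one_self)
  also have "\<dots> = exp (t * c)" by (simp add: exp_of_nat_mult[symmetric] mult.commute)
  also have "\<dots> \<le> exp k"
  proof -
    have "t * c \<le> t * N" using t0 assms by (intro mult_left_mono) auto
    also have "t * N \<le> k" unfolding t_def using assms by (simp add: field_simps)
    finally show ?thesis by simp
  qed
  finally have "t^k * real (\<Sum>s\<le>k. c choose s) \<le> exp k" .
  hence "real (\<Sum>s\<le>k. c choose s) \<le> exp k / t^k" using t0 by (simp add: field_simps)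
  also have "\<dots> = exp k * ((real N + k) / k) ^ k" unfolding t_def by (simp add: power_divide)
  finally show ?thesis .
qed


lemma finite_words: "finite (words q n)"
proof -
  have "words q n = {xs. set xs \<subseteq> {1..q} \<and> length xs = n}" unfolding words_def by auto
  thus ?thesis using finite_lists_length_eq[of "{1..q}" n] by simp
qed

lemma sort_words: "x \<in> words q n \<Longrightarrow> sort x \<in> words q n"
  unfolding words_def by simp

lemma aux_half: assumes "0 \<le> (a::real)" "1/2 \<le> b" shows "a \<le> 2*(a*b)"
proof -
  have "a * 1 \<le> a * (2*b)" using assms by (intro mult_left_mono) auto
  thus ?thesis by simp
qed

lemma code_bound:
  assumes code: "is_ID_code q n M Q D" and q: "q \<ge> 1"
    and e1: "type1_err q n M Q D < \<epsilon>" and e2: "type2_err q n M Q D < \<epsilon>"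
    and eps: "0 < \<epsilon>" "\<epsilon> < 1/4"
    and k: "k \<ge> 1" and small: "(2*\<epsilon>/(1-2*\<epsilon>))^k * M < 1"
  shows "real M \<le> exp k * ((real ((n+1)^(q-1)) + k)/k)^k"
proof -
  define W where "W = words q n"
  have finW: "finite W" unfolding W_def by (rule finite_words)
  have lenW: "x \<in> W \<Longrightarrow> length x = n" for x unfolding W_def words_def by auto
  have codeI: "\<And>m. m \<in> {1..M} \<Longrightarrow> (\<forall>x\<in>W. 0 \<le> Q m x) \<and> (\<Sum>x\<in>W. Q m x) = 1 \<and> D m \<subseteq> W"
    using code unfolding is_ID_code_def W_def by blast
  define h where "h j x = phi (D j) x / fact n" for j x
  have h01: "0 \<le> h j x \<and> h j x \<le> 1" if "x \<in> W" for j x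
    using phi_bounds[of "D j" x] lenW[OF that] unfolding h_def by auto
  have hsort: "h j (sort x) = h j x" for j x unfolding h_def by (simp add: phi_sort)
  have cross: "err_cross q n Q D i j = (\<Sum>x\<in>W. Q i x * h j x)" if "j \<in> {1..M}" for i j
  proof -
    have "finite (D j)" using codeI[OF that] finW finite_subset by blast
    thus ?thesis unfolding err_cross_def W_def[symmetric] h_def
      by (intro sum.cong refl) (simp add: h_eq lenW)
  qed
  have miss: "err_miss q n Q D i = (\<Sum>x\<in>W. Q i x * (1 - h i x))" if "i \<in> {1..M}" for i
  proof -
    have sub: "D i \<subseteq> W" using codeI[OF that] by blast
    have "finite (W - D i)" using finW by simp
    have "(\<Sum>y\<in>W - D i. perm_channel n y x) = 1 - h i x" if x: "x \<in> W" for x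
    proof -
      have "(\<Sum>y\<in>W - D i. perm_channel n y x) = phi (W - D i) x / fact n"
        using finW lenW[OF x] by (simp add: h_eq)
      also have "\<dots> = (phi W x - phi (D i) x) / fact n" using phi_diff[OF finW sub] by simp
      also have "\<dots> = 1 - h i x" using phi_words[of x q n] x unfolding W_def h_def
        by (simp add: diff_divide_distrib)
      finally show ?thesis .
    qed
    thus ?thesis unfolding err_miss_def W_def[symmetric] by (intro sum.cong refl) simp
  qed
  have missle: "err_miss q n Q D i < \<epsilon>" if "i \<in> {1..M}" for i
  proof -
    have "err_miss q n Q D i \<le> type1_err q n M Q D" unfolding type1_err_def
      using that by (intro Max_ge) auto
    thus ?thesis using e1 by simp
  qed
  have crossle: "err_cross q n Q D i j < \<epsilon>" if "i \<in> {1..M}" "j \<in> {1..M}" "i \<noteq> j" for i j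
  proof -
    have fin2: "finite {(i,j). i \<in> {1..M} \<and> j \<in> {1..M} \<and> i \<noteq> j}"
      by (rule finite_subset[of _ "{1..M} \<times> {1..M}"]) auto
    have "err_cross q n Q D i j \<le> type2_err q n M Q D" unfolding type2_err_def
      using that fin2 by (intro Max_ge) (auto intro!: imageI)
    thus ?thesis using e2 by simp
  qed
  define A where "A j = {x\<in>W. h j x \<ge> 1/2}" for j
  have Asort: "x \<in> W \<Longrightarrow> (sort x \<in> A j) = (x \<in> A j)" for x j
    unfolding A_def W_def using sort_words hsort by auto
  have QA: "(\<Sum>x\<in>A j. Q i x) \<le> 2 * err_cross q n Q D i j" if "i \<in> {1..M}" "j \<in> {1..M}" for i j
  proof -
    have nn: "\<forall>x\<in>W. 0 \<le> Q i x" using codeI[OF that(1)] by blast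
    have "(\<Sum>x\<in>A j. Q i x) \<le> (\<Sum>x\<in>A j. 2 * (Q i x * h j x))"
      using nn unfolding A_def by (intro sum_mono) (auto intro!: aux_half)
    also have "\<dots> \<le> (\<Sum>x\<in>W. 2 * (Q i x * h j x))"
      using nn h01 finW unfolding A_def by (intro sum_mono2) auto
    also have "\<dots> = 2 * err_cross q n Q D i j" using cross[OF that(2)] by (simp add: sum_distrib_left)
    finally show ?thesis .
  qed
  have QAi: "(\<Sum>x\<in>A i. Q i x) > 1 - 2*\<epsilon>" if "i \<in> {1..M}" for i
  proof -
    have nn: "\<forall>x\<in>W. 0 \<le> Q i x" and one: "(\<Sum>x\<in>W. Q i x) = 1" using codeI[OF that] by blast+
    have AW: "A i \<subseteq> W" unfolding A_def by auto
    have "(\<Sum>x\<in>W - A i. Q i x) \<le> (\<Sum>x\<in>W - A i. 2 * (Q i x * (1 - h i x)))"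
      using nn unfolding A_def by (intro sum_mono) (auto intro!: aux_half)
    also have "\<dots> \<le> (\<Sum>x\<in>W. 2 * (Q i x * (1 - h i x)))"
      using nn h01 finW by (intro sum_mono2) auto
    also have "\<dots> = 2 * err_miss q n Q D i" using miss[OF that] by (simp add: sum_distrib_left)
    finally have "(\<Sum>x\<in>W - A i. Q i x) < 2 * \<epsilon>" using missle[OF that] by linarith
    moreover have "(\<Sum>x\<in>W. Q i x) = (\<Sum>x\<in>A i. Q i x) + (\<Sum>x\<in>W - A i. Q i x)"
      using finW AW by (metis sum.subset_diff add.commute)
    ultimately show ?thesis using one by linarith
  qed
  define \<eta> where "\<eta> = 2*\<epsilon>/(1-2*\<epsilon>)"
  have eta0: "\<eta> \<ge> 0" unfolding \<eta>_def using eps by auto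
  have "\<exists>S. S \<subseteq> A i \<and> card S \<le> k \<and> (\<forall>j\<in>{1..M}. j \<noteq> i \<longrightarrow> \<not> S \<subseteq> A j)" if i: "i \<in> {1..M}" for i
  proof -
    have AW: "A i \<subseteq> W" unfolding A_def by auto
    have finA: "finite (A i)" using AW finW finite_subset by blast
    have nn: "\<forall>x\<in>A i. 0 \<le> Q i x" using codeI[OF i] AW by blast
    have pos: "(\<Sum>x\<in>A i. Q i x) > 0" using QAi[OF i] eps by linarith
    have sm: "\<forall>j\<in>{1..M} - {i}. (\<Sum>x\<in>A i \<inter> A j. Q i x) \<le> \<eta> * (\<Sum>x\<in>A i. Q i x)"
    proof
      fix j assume j: "j \<in> {1..M} - {i}"
      have nnj: "\<forall>x\<in>A j. 0 \<le> Q i x" using codeI[OF i] unfolding A_def by auto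
      have finAj: "finite (A j)" using finW unfolding A_def by simp
      have "(\<Sum>x\<in>A i \<inter> A j. Q i x) \<le> (\<Sum>x\<in>A j. Q i x)"
        using nnj finAj by (intro sum_mono2) auto
      also have "\<dots> < 2 * \<epsilon>" using QA[OF i, of j] crossle[OF i, of j] j by auto
      also have "2 * \<epsilon> = \<eta> * (1 - 2*\<epsilon>)" unfolding \<eta>_def using eps by simp
      also have "\<dots> \<le> \<eta> * (\<Sum>x\<in>A i. Q i x)" using QAi[OF i] eta0 by (intro mult_left_mono) auto
      finally show "(\<Sum>x\<in>A i \<inter> A j. Q i x) \<le> \<eta> * (\<Sum>x\<in>A i. Q i x)" by simp
    qed
    obtain S where S: "S \<subseteq> A i" "card S \<le> k"
      "real (card {j\<in>{1..M} - {i}. S \<subseteq> A j}) \<le> \<eta>^k * card ({1..M} - {i})"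
      using greedy[OF finA nn pos _ sm eta0, of k] by auto
    have "card ({1..M} - {i}) \<le> card {1..M}" by (rule card_mono) auto
    hence "card ({1..M} - {i}) \<le> M" by simp
    hence "\<eta>^k * card ({1..M} - {i}) \<le> \<eta>^k * M" using eta0 by (intro mult_left_mono) auto
    hence "real (card {j\<in>{1..M} - {i}. S \<subseteq> A j}) < 1" using S(3) small unfolding \<eta>_def by linarith
    hence "card {j\<in>{1..M} - {i}. S \<subseteq> A j} = 0" by linarith
    hence "{j\<in>{1..M} - {i}. S \<subseteq> A j} = {}" by (simp add: card_eq_0_iff)
    thus ?thesis using S(1,2) by (intro exI[of _ S]) auto
  qed
  then obtain S where S: "\<And>i. i \<in> {1..M} \<Longrightarrow> S i \<subseteq> A i \<and> card (S i) \<le> k \<and> (\<forall>j\<in>{1..M}. j \<noteq> i \<longrightarrow> \<not> S i \<subseteq> A j)"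
    by metis
  define T where "T i = sort ` S i" for i
  have T1: "T i \<subseteq> A i" if "i \<in> {1..M}" for i
    using S[OF that] Asort unfolding T_def A_def by auto
  have T2: "\<not> T i \<subseteq> A j" if "i \<in> {1..M}" "j \<in> {1..M}" "j \<noteq> i" for i j
  proof
    assume "T i \<subseteq> A j"
    hence "S i \<subseteq> A j" using S[OF that(1)] Asort unfolding T_def A_def by auto
    thus False using S[OF that(1)] that by auto
  qed
  have T3: "T i \<subseteq> sort ` W \<and> card (T i) \<le> k" if "i \<in> {1..M}" for i
  proof -
    have "S i \<subseteq> W" using S[OF that] unfolding A_def by auto
    moreover have "card (T i) \<le> card (S i)" unfolding T_def by (rule card_image_le)
      (use \<open>S i \<subseteq> W\<close> finW finite_subset in blast)
    ultimately show ?thesis using S[OF that] unfolding T_def by auto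
  qed
  have injT: "inj_on T {1..M}"
  proof (rule inj_onI)
    fix i j assume "i \<in> {1..M}" "j \<in> {1..M}" "T i = T j"
    thus "i = j" using T1 T2 by metis
  qed
  have "M = card (T ` {1..M})" using injT by (simp add: card_image)
  also have "\<dots> \<le> card {S. S \<subseteq> sort ` W \<and> card S \<le> k}"
    using T3 finW by (intro card_mono) (auto, blast)
  also have "\<dots> = (\<Sum>s\<le>k. card (sort ` W) choose s)" using finW by (simp add: card_small_subsets)
  finally have "real M \<le> real (\<Sum>s\<le>k. card (sort ` W) choose s)" by linarith
  also have "\<dots> \<le> exp k * ((real ((n+1)^(q-1)) + k)/k)^k"
    using card_sorted_words[OF q, of n] k unfolding W_def by (intro binom_partial_bound) auto
  finally show ?thesis .
qed


lemma ev1: assumes "\<mu> > 0" shows "eventually (\<lambda>m::nat. real m powr (-\<mu>) < 1/4) at_top"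
  using assms by real_asymp

lemma ev2: assumes "\<mu> > 0" "K > 0"
  shows "eventually (\<lambda>m::nat. 1 + ln (1 + K * \<mu> * ln (real m)) \<le> (\<mu> * ln (real m) - ln 4) / 2) at_top"
  using assms by real_asymp

lemma ev3: assumes "\<mu> > 0" "K > 0" "R' > 0"
  shows "eventually (\<lambda>m::nat. 2 * (1 + ln (1 + K * \<mu> * ln (real m))) < R' * real m) at_top"
  using assms by real_asymp


lemma final_arith:
  fixes L c k N B :: real
  assumes L: "L > 0" and c: "c > 0" and k1: "L / c \<le> k" and k2: "k \<le> L / c + 1"
    and main: "L \<le> k * (1 + ln (1 + N / k))" and N: "N \<ge> 0" and NB: "N * c / L \<le> B"
    and Bc: "1 + ln (1 + B) \<le> c / 2" and BL: "2 * (1 + ln (1 + B)) < L"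
  shows False
proof -
  define G where "G = 1 + ln (1 + B)"
  have kpos: "k > 0" using k1 L c by (smt (verit) divide_pos_pos)
  have "N / k \<le> N * c / L"
  proof -
    have "1 / k \<le> c / L" using k1 L c kpos by (simp add: field_simps)
    hence "N * (1/k) \<le> N * (c / L)" using N by (intro mult_left_mono) auto
    thus ?thesis by simp
  qed
  hence NkB: "N / k \<le> B" using NB by linarith
  have Nk0: "N / k \<ge> 0" using N kpos by simp
  have "ln (1 + N / k) \<le> ln (1 + B)" using NkB Nk0 by (subst ln_le_cancel_iff) auto
  hence "L \<le> k * G" using main kpos unfolding G_def
    by (smt (verit) mult_left_mono)
  also have "\<dots> \<le> (L / c + 1) * G"
  proof -
    have "G \<ge> 0" unfolding G_def using NkB Nk0 ln_ge_zero[of "1+B"] by linarith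
    thus ?thesis using k2 by (intro mult_right_mono) auto
  qed
  also have "\<dots> = L * (G / c) + G" by (simp add: field_simps)
  also have "\<dots> \<le> L * (1/2) + G"
  proof -
    have "G / c \<le> 1/2" using Bc c unfolding G_def by (simp add: field_simps)
    thus ?thesis using L by (smt (verit) mult_left_mono)
  qed
  finally have "L \<le> 2 * G" by linarith
  thus False using BL unfolding G_def by linarith
qed

theorem theorem1:
  fixes q :: nat and \<mu> R :: real
  assumes "q \<ge> 2" and "\<mu> > 0" and "R > 0"
  shows "\<not> (\<exists>(n :: nat \<Rightarrow> nat) (M :: nat \<Rightarrow> nat) Q D.
            filterlim n at_top sequentially \<and>
            (\<forall>i. is_ID_code q (n i) (M i) (Q i) (D i) \<and>
                 real (M i) \<ge> 2 powr (R * real (n i) ^ (q - 1)) \<and>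
                 type1_err q (n i) (M i) (Q i) (D i) < real (n i) powr (- \<mu>) \<and>
                 type2_err q (n i) (M i) (Q i) (D i) < real (n i) powr (- \<mu>)))"
proof
  assume "\<exists>(n :: nat \<Rightarrow> nat) (M :: nat \<Rightarrow> nat) Q D.
            filterlim n at_top sequentially \<and>
            (\<forall>i. is_ID_code q (n i) (M i) (Q i) (D i) \<and>
                 real (M i) \<ge> 2 powr (R * real (n i) ^ (q - 1)) \<and>
                 type1_err q (n i) (M i) (Q i) (D i) < real (n i) powr (- \<mu>) \<and>
                 type2_err q (n i) (M i) (Q i) (D i) < real (n i) powr (- \<mu>))"
  then obtain n :: "nat \<Rightarrow> nat" and M :: "nat \<Rightarrow> nat" and Q D where lim: "filterlim n at_top sequentially"
    and H: "\<forall>i. is_ID_code q (n i) (M i) (Q i) (D i) \<and>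
                 real (M i) \<ge> 2 powr (R * real (n i) ^ (q - 1)) \<and>
                 type1_err q (n i) (M i) (Q i) (D i) < real (n i) powr (- \<mu>) \<and>
                 type2_err q (n i) (M i) (Q i) (D i) < real (n i) powr (- \<mu>)"
    by blast
  define R' where "R' = R * ln 2"
  have R'0: "R' > 0" using assms by (simp add: R'_def)
  define K where "K = 2^(q-1) / R'"
  have K0: "K > 0" using R'0 by (simp add: K_def)
  have ev: "eventually (\<lambda>m::nat. real m powr (-\<mu>) < 1/4 \<and>
      1 + ln (1 + K * \<mu> * ln (real m)) \<le> (\<mu> * ln (real m) - ln 4) / 2 \<and>
      2 * (1 + ln (1 + K * \<mu> * ln (real m))) < R' * real m \<and> m \<ge> 1) at_top"
    using ev1[OF assms(2)] ev2[OF assms(2) K0] ev3[OF assms(2) K0 R'0] eventually_ge_at_top[of "1::nat"]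
    by (intro eventually_conj) auto
  obtain i where P: "real (n i) powr (-\<mu>) < 1/4"
      "1 + ln (1 + K * \<mu> * ln (real (n i))) \<le> (\<mu> * ln (real (n i)) - ln 4) / 2"
      "2 * (1 + ln (1 + K * \<mu> * ln (real (n i)))) < R' * real (n i)" "n i \<ge> 1"
    using eventually_compose_filterlim[OF ev lim] unfolding eventually_sequentially by blast
  define m where "m = n i"
  define MM where "MM = M i"
  have code: "is_ID_code q m MM (Q i) (D i)" and Mlow: "real MM \<ge> 2 powr (R * real m ^ (q - 1))"
    and t1: "type1_err q m MM (Q i) (D i) < real m powr (- \<mu>)"
    and t2: "type2_err q m MM (Q i) (D i) < real m powr (- \<mu>)"
    using H unfolding m_def MM_def by auto
  have m1: "m \<ge> 1" using P(4) m_def by simp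
  define \<epsilon> where "\<epsilon> = real m powr (-\<mu>)"
  have eps0: "\<epsilon> > 0" using m1 by (simp add: \<epsilon>_def)
  have eps4: "\<epsilon> < 1/4" using P(1) by (simp add: \<epsilon>_def m_def)
  have lneps: "ln \<epsilon> = - \<mu> * ln (real m)" by (simp add: \<epsilon>_def)
  define \<eta> where "\<eta> = 2*\<epsilon>/(1-2*\<epsilon>)"
  have eta0: "\<eta> > 0" using eps0 eps4 by (simp add: \<eta>_def)
  have eta_le: "\<eta> \<le> 4 * \<epsilon>" using eps0 eps4 by (simp add: \<eta>_def field_simps)
  have eta_ge: "\<eta> \<ge> \<epsilon>" using eps0 eps4 by (simp add: \<eta>_def field_simps)
  define c where "c = - ln \<eta>"
  have c_lo: "c \<ge> \<mu> * ln (real m) - ln 4"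
  proof -
    have "ln \<eta> \<le> ln (4 * \<epsilon>)" using eta_le eta0 by simp
    also have "\<dots> = ln 4 + ln \<epsilon>" using eps0 by (simp add: ln_mult)
    finally show ?thesis unfolding c_def lneps by linarith
  qed
  have c_hi: "c \<le> \<mu> * ln (real m)"
  proof -
    have "ln \<epsilon> \<le> ln \<eta>" using eta_ge eps0 by simp
    thus ?thesis unfolding c_def lneps by linarith
  qed
  have "(\<mu> * ln (real m) - ln 4) / 2 \<le> c / 2" using c_lo by (rule divide_right_mono) simp
  hence Bc: "1 + ln (1 + K * \<mu> * ln (real m)) \<le> c / 2" using P(2) unfolding m_def by linarith
  have lnm0: "ln (real m) \<ge> 0" using m1 by simp
  have "K * \<mu> * ln (real m) \<ge> 0" using K0 assms(2) lnm0 by simp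
  hence "ln (1 + K * \<mu> * ln (real m)) \<ge> 0" by simp
  hence c0: "c > 0" using Bc by linarith
  have pow_pos: "(2::real) powr (R * real m ^ (q - 1)) > 0" by simp
  have MM0: "real MM > 0" using Mlow pow_pos by linarith
  define L where "L = ln (real MM)"
  have mpow: "real m ^ (q-1) \<ge> real m"
  proof -
    have qq: "q - 1 = Suc (q - 2)" using assms(1) by simp
    have "real m ^ (q-1) = real m * real m ^ (q-2)" unfolding qq by simp
    moreover have "real m ^ (q-2) \<ge> 1" using m1 by (simp add: one_le_power)
    hence "real m * 1 \<le> real m * real m ^ (q-2)" by (intro mult_left_mono) auto
    ultimately show ?thesis by simp
  qed
  have Lge: "L \<ge> R' * real m ^ (q-1)"
  proof -
    have "ln (2 powr (R * real m ^ (q - 1))) \<le> L" unfolding L_def using Mlow pow_pos MM0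
      by (subst ln_le_cancel_iff) auto
    thus ?thesis unfolding R'_def by (simp add: mult.commute mult.left_commute)
  qed
  have "R' * real m \<le> R' * real m ^ (q-1)" using mpow R'0 by (intro mult_left_mono) auto
  hence LgeRm: "L \<ge> R' * real m" using Lge by linarith
  have "R' * real m > 0" using R'0 m1 by simp
  hence L0: "L > 0" using LgeRm by linarith
  define k where "k = nat \<lfloor>L / c\<rfloor> + 1"
  have fl0: "\<lfloor>L / c\<rfloor> \<ge> 0" using L0 c0 by simp
  have kreal: "real k = of_int \<lfloor>L / c\<rfloor> + 1" unfolding k_def using fl0 by simp
  have k1: "L / c < real k" using kreal by linarith
  have k2: "real k \<le> L / c + 1" using kreal by linarith
  have kge1: "k \<ge> 1" unfolding k_def by simp
  have small: "(2*\<epsilon>/(1-2*\<epsilon>))^k * MM < 1"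
  proof -
    have "\<eta> = exp (-c)" unfolding c_def using eta0 by simp
    hence "\<eta>^k = exp (real k * (-c))" by (simp only: exp_of_nat_mult)
    moreover have "real MM = exp L" unfolding L_def using MM0 by simp
    ultimately have "\<eta>^k * MM = exp (L - real k * c)" by (simp add: exp_add[symmetric])
    moreover have "L - real k * c < 0" using k1 c0 by (simp add: field_simps)
    ultimately show ?thesis unfolding \<eta>_def by simp
  qed
  have q1: "q \<ge> 1" using assms(1) by simp
  define N where "N = real ((m+1)^(q-1))"
  have bound: "real MM \<le> exp k * ((N + k)/k)^k"
    using code_bound[OF code q1 t1[folded \<epsilon>_def] t2[folded \<epsilon>_def] eps0 eps4 kge1 small] unfolding N_def .
  have kpos: "real k > 0" using kge1 by simp
  have N0: "N \<ge> 0" unfolding N_def by simp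
  have main: "L \<le> real k * (1 + ln (1 + N / real k))"
  proof -
    have pos: "(N + k)/k > 0" using N0 kpos by simp
    have "L \<le> ln (exp k * ((N + k)/k)^k)" unfolding L_def using bound MM0 by simp
    also have "\<dots> = real k + real k * ln ((N + k)/k)" using pos kpos N0 by (simp add: ln_mult ln_realpow)
    also have "(N + k)/k = 1 + N / k" using kpos by (simp add: field_simps)
    finally show ?thesis by (simp add: algebra_simps)
  qed
  have NB: "N * c / L \<le> K * \<mu> * ln (real m)"
  proof -
    have "real (m+1) \<le> 2 * real m" using m1 by simp
    hence "real (m+1) ^ (q-1) \<le> (2 * real m)^(q-1)" by (intro power_mono) auto
    hence "N \<le> 2^(q-1) * real m ^ (q-1)" unfolding N_def by (simp add: power_mult_distrib)
    also have "\<dots> \<le> 2^(q-1) * (L / R')" using Lge R'0 by (intro mult_left_mono) (auto simp: field_simps)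
    also have "\<dots> = K * L" unfolding K_def by simp
    finally have "N \<le> K * L" .
    hence "N * c / L \<le> K * L * c / L" using c0 L0 by (intro divide_right_mono mult_right_mono) auto
    also have "\<dots> = K * c" using L0 by simp
    also have "\<dots> \<le> K * (\<mu> * ln (real m))" using c_hi K0 by (intro mult_left_mono) auto
    finally show ?thesis by (simp add: mult.assoc)
  qed
  have BL: "2 * (1 + ln (1 + K * \<mu> * ln (real m))) < L" using P(3) LgeRm unfolding m_def by linarith
  show False using final_arith[OF L0 c0 less_imp_le[OF k1] k2 main N0 NB Bc BL] .
qed
end
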